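(* Let $\alpha>0$, $\beta\ge0$, $c_{\mathrm{cp}}\in(-1,1)$, $h,\mu,s,\Omega\in\mathbb R$, and write $\beta^+=\beta/(1+c_{\mathrm{cp}})$, $\beta^-=\beta/(1-c_{\mathrm{cp}})$. (i) Consider the planar system (dynamics on the chart $\theta=0$) $p'=h-\Omega-\alpha sp+sq-(p^2-q^2+\mu)$, $q'=\alpha\Omega-\beta^+-sp-\alpha sq-2pq$. If $\Omega=\frac{\beta^+}{\alpha}-\frac{s^2}{2}$, then the line $\{q=-\frac s2\}$ is invariant, and on $\{q\neq-\frac s2\}$ the function $H^0(p,q)=-\frac{p^2+q^2+\alpha sp+sq-h+\beta^+/\alpha+\mu}{q+\frac s2}$ is constant along solutions, the system being Hamiltonian with Hamiltonian $H^0$ after a rescaling of the independent variable. (ii) Consider the planar system (dynamics on the chart $\theta=\pi$) $p'=h-\Omega-\alpha sp+sq+(p^2-q^2+\mu)$, $q'=\alpha\Omega-\beta^--sp-\alpha sq+2pq$. If $\Omega=\frac{\beta^-}{\alpha}+\frac{s^2}{2}$, then the line $\{q=\frac s2\}$ is invariant, and on $\{q\neq\frac s2\}$ the function $H^\pi(p,q)=\frac{p^2+q^2-\alpha sp-sq+h-\beta^-/\alpha+\mu}{q-\frac s2}$ is constant along solutions, the system being Hamiltonian with Hamiltonian $H^\pi$ after a rescaling of the independent variable. (iii) Moreover, in case (i), if additionally $\Omega>h-\mu+\frac{s^2}{4}(\alpha^2-1)$, each half plane $\{q\le-\frac s2\}$, $\{q\ge-\frac s2\}$ is filled with periodic orbits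 encircling the equilibria of the system in (i); in case (ii), if additionally $\Omega<h+\mu+\frac{s^2}{4}(1+\alpha^2)$, each half plane $\{q\le\frac s2\}$, $\{q\ge\frac s2\}$ is filled with periodic orbits encircling the equilibria of the system in (ii).
   Context: These planar systems are the restrictions to the invariant planes $\theta=0$ and $\theta=\pi$ of the desingularized coherent structure system $\theta'=\sin(\theta)p$, $p'=h-\Omega-\alpha sp+sq-(p^2-q^2+\mu)\cos\theta$, $q'=\alpha\Omega-\beta/(1+c_{\mathrm{cp}}\cos\theta)-sp-\alpha sq-2pq\cos\theta$ arising from the Landau–Lifshitz–Gilbert–Slonczewski equation with speed $s$ and frequency $\Omega$.
   Formalization: In part (iii), case (ii) assumes $\Omega<h+\mu+\frac{s^2}{4}(1-\alpha^2)$ in place of $\Omega<h+\mu+\frac{s^2}{4}(1+\alpha^2)$. The statement above fails without it. *)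

theory Defs
  imports "HOL-Complex_Analysis.Complex_Analysis"
begin

definition F0 :: "real \<Rightarrow> real \<Rightarrow> real \<Rightarrow> real \<Rightarrow> real \<Rightarrow> real \<Rightarrow> real \<Rightarrow> real \<times> real \<Rightarrow> real \<times> real" where
  "F0 \<alpha> \<beta> c h \<mu> s \<Omega> = (\<lambda>(p, q).
     (h - \<Omega> - \<alpha> * s * p + s * q - (p^2 - q^2 + \<mu>),
      \<alpha> * \<Omega> - \<beta>/(1+c) - s * p - \<alpha> * s * q - 2 * p * q))"

definition Fpi :: "real \<Rightarrow> real \<Rightarrow> real \<Rightarrow> real \<Rightarrow> real \<Rightarrow> real \<Rightarrow> real \<Rightarrow> real \<times> real \<Rightarrow> real \<times> real" where
  "Fpi \<alpha> \<beta> c h \<mu> s \<Omega> = (\<lambda>(p, q).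
     (h - \<Omega> - \<alpha> * s * p + s * q + (p^2 - q^2 + \<mu>),
      \<alpha> * \<Omega> - \<beta>/(1-c) - s * p - \<alpha> * s * q + 2 * p * q))"

definition H0 :: "real \<Rightarrow> real \<Rightarrow> real \<Rightarrow> real \<Rightarrow> real \<Rightarrow> real \<Rightarrow> real \<times> real \<Rightarrow> real" where
  "H0 \<alpha> \<beta> c h \<mu> s = (\<lambda>(p, q).
     - (p^2 + q^2 + \<alpha> * s * p + s * q - h + (\<beta>/(1+c))/\<alpha> + \<mu>) / (q + s/2))"

definition Hpi :: "real \<Rightarrow> real \<Rightarrow> real \<Rightarrow> real \<Rightarrow> real \<Rightarrow> real \<Rightarrow> real \<times> real \<Rightarrow> real" where
  "Hpi \<alpha> \<beta> c h \<mu> s = (\<lambda>(p, q).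
     (p^2 + q^2 - \<alpha> * s * p - s * q + h - (\<beta>/(1-c))/\<alpha> + \<mu>) / (q - s/2))"

definition is_solution :: "(real \<times> real \<Rightarrow> real \<times> real) \<Rightarrow> real set \<Rightarrow> (real \<Rightarrow> real \<times> real) \<Rightarrow> bool" where
  "is_solution F I x \<longleftrightarrow> is_interval I \<and>
     (\<forall>t\<in>I. (x has_vector_derivative F (x t)) (at t within I))"

definition line_invariant :: "(real \<times> real \<Rightarrow> real \<times> real) \<Rightarrow> real \<Rightarrow> bool" where
  "line_invariant F l \<longleftrightarrow> (\<forall>I x t0 t. is_solution F I x \<and> t0 \<in> I \<and> t \<in> I \<and> snd (x t0) = l
       \<longrightarrow> snd (x t) = l)"

definition conserved_off_line :: "(real \<times> real \<Rightarrow> real \<times> real) \<Rightarrow> (real \<times> real \<Rightarrow> real) \<Rightarrow> real \<Rightarrow> bool" where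
  "conserved_off_line F H l \<longleftrightarrow> (\<forall>I x. is_solution F I x \<and> (\<forall>t\<in>I. snd (x t) \<noteq> l)
       \<longrightarrow> (\<exists>C. \<forall>t\<in>I. H (x t) = C))"

text \<open>On q \<noteq> l, the field is (q-l)^2 times the Hamiltonian field
  (p' = -dH/dq, q' = dH/dp) of H, i.e. Hamiltonian after the rescaling
  d tau = (q-l)^2 dt of the independent variable.\<close>
definition rescaled_hamiltonian :: "(real \<times> real \<Rightarrow> real \<times> real) \<Rightarrow> (real \<times> real \<Rightarrow> real) \<Rightarrow> real \<Rightarrow> bool" where
  "rescaled_hamiltonian F H l \<longleftrightarrow> (\<forall>p q. q \<noteq> l \<longrightarrow>
     (\<exists>Hp Hq. (H has_derivative (\<lambda>(dp, dq). Hp * dp + Hq * dq)) (at (p, q)) \<and>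
              F (p, q) = ((q - l)^2  *  (- Hq), (q - l)^2  *  Hp)))"

definition to_complex :: "real \<times> real \<Rightarrow> complex" where
  "to_complex z = Complex (fst z) (snd z)"

definition periodic_solution :: "(real \<times> real \<Rightarrow> real \<times> real) \<Rightarrow> real \<times> real \<Rightarrow> real \<Rightarrow> (real \<Rightarrow> real \<times> real) \<Rightarrow> bool" where
  "periodic_solution F z0 T x \<longleftrightarrow> is_solution F UNIV x \<and> x 0 = z0 \<and> T > 0 \<and> (\<forall>t. x (t + T) = x t)"

definition filled_with_periodic_orbits :: "(real \<times> real \<Rightarrow> real \<times> real) \<Rightarrow> (real \<times> real) set \<Rightarrow> bool" where
  "filled_with_periodic_orbits F S \<longleftrightarrow>
     (\<exists>e\<in>S. F e = 0) \<and>
     (\<forall>z0\<in>S. F z0 \<noteq> 0 \<longrightarrow>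
        (\<exists>x T. periodic_solution F z0 T x \<and> (\<forall>t. x t \<in> S) \<and>
           (\<forall>e\<in>S. F e = 0 \<longrightarrow>
              to_complex e \<notin> path_image (\<lambda>u. to_complex (x (T * u))) \<and>
              winding_number (\<lambda>u. to_complex (x (T * u))) (to_complex e) \<noteq> 0)))"

end

theory Submission
  imports Defs
begin

lemma norm_u: "norm (b * exp (- (2 * \<i> * of_real k * of_real t))) = norm b"
proof -
  have "- (2 * \<i> * of_real k * of_real t) = \<i> * of_real (-2*k*t)" by simp
  then show ?thesis by (simp add: norm_mult norm_exp_eq_Re)
qed

lemma riccati_alg:
  fixes u K :: complex
  assumes "1 + u \<noteq> 0"
  shows "((- (-2 * \<i> * K * u)) * (1 + u) - (1 - u) * (-2 * \<i> * K * u)) / ((1 + u) * (1 + u)) * (\<i> * K)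
    = - (K ^ 2 + (\<i> * K * (1 - u) / (1 + u))^2)"
proof -
  define D where "D = 1 + u"
  have u: "u = D - 1" unfolding D_def by simp
  have D: "D \<noteq> 0" using assms D_def by simp
  show ?thesis unfolding D_def[symmetric] unfolding u using D
    by (simp add: field_simps power2_eq_square)
qed

lemma W_deriv:
  fixes k t :: real and b :: complex
  assumes "norm b \<noteq> 1"
  defines "W \<equiv> \<lambda>z::complex. \<i> * of_real k * (1 - b * exp (- (2 * \<i> * of_real k * z))) / (1 + b * exp (- (2 * \<i> * of_real k * z)))"
  shows "((\<lambda>t. W (of_real t)) has_vector_derivative (- (of_real k ^ 2 + (W (of_real t))^2))) (at t within S)"
proof -
  define U where "U = (\<lambda>z::complex. b * exp (- (2 * \<i> * of_real k * z)))"
  let ?u = "U (of_real t)"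
  have nz: "1 + ?u \<noteq> 0"
  proof
    assume "1 + ?u = 0"
    then have "?u = -1" by (simp add: add_eq_0_iff)
    then have "norm ?u = 1" by simp
    with norm_u[of b k t] assms show False by (simp add: U_def)
  qed
  have dU: "(U has_field_derivative (-2 * \<i> * of_real k * U z)) (at z)" for z
  proof -
    have "((\<lambda>z. - (2 * \<i> * of_real k * z)) has_field_derivative (- (2 * \<i> * of_real k))) (at z)"
      using DERIV_cmult[OF DERIV_ident, of "2 * \<i> * of_real k"] by (intro DERIV_minus) simp
    from DERIV_cmult[OF DERIV_chain2[OF DERIV_exp this], of b]
    show ?thesis unfolding U_def by (simp add: algebra_simps)
  qed
  have d1: "((\<lambda>z. 1 - U z) has_field_derivative (- (-2 * \<i> * of_real k * U z))) (at z)" for z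
    using DERIV_diff[OF DERIV_const dU[of z], of 1] by simp
  have d2: "((\<lambda>z. 1 + U z) has_field_derivative (-2 * \<i> * of_real k * U z)) (at z)" for z
    using DERIV_add[OF DERIV_const dU[of z], of 1] by simp
  have "((\<lambda>z. (1 - U z) / (1 + U z)) has_field_derivative
     ((- (-2 * \<i> * of_real k * ?u)) * (1 + ?u) - (1 - ?u) * (-2 * \<i> * of_real k * ?u)) / ((1 + ?u) * (1 + ?u))) (at (of_real t))"
    by (rule DERIV_divide[OF d1 d2 nz])
  from DERIV_cmult[OF this, of "\<i> * of_real k"]
  have "((\<lambda>z. \<i> * of_real k * ((1 - U z) / (1 + U z))) has_field_derivative
      - (of_real k ^ 2 + (\<i> * of_real k * (1 - ?u) / (1 + ?u))^2)) (at (of_real t))"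
    using riccati_alg[OF nz, of "of_real k"] by (simp add: mult.commute)
  then have "(W has_field_derivative (- (of_real k ^ 2 + (W (of_real t))^2))) (at (of_real t))"
    unfolding W_def U_def by (simp add: times_divide_eq_right)
  then show ?thesis by (rule has_vector_derivative_real_field)
qed

lemma wind:
  fixes \<gamma> :: "real \<Rightarrow> complex" and m :: real
  assumes d: "norm d < 1" and A: "A \<noteq> 0" and m: "m = 1 \<or> m = -1"
    and g: "\<And>v. \<gamma> v - z = A * exp (of_real m * 2 * of_real pi * \<i> * of_real v) / (1 + d * exp (of_real m * 2 * of_real pi * \<i> * of_real v))"
  shows "z \<notin> path_image \<gamma>" and "winding_number \<gamma> z = of_real m"
proof -
  define e where "e = (\<lambda>v::real. exp (of_real m * 2 * of_real pi * \<i> * of_real v))"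
  have ne: "norm (e v) = 1" for v
    unfolding e_def by (simp add: norm_exp_eq_Re)
  have re: "Re (1 + d * e v) > 0" for v
  proof -
    have "\<bar>Re (d * e v)\<bar> \<le> norm (d * e v)" by (rule abs_Re_le_cmod)
    also have "\<dots> < 1" using d by (simp add: norm_mult ne)
    finally show ?thesis by simp
  qed
  then have nz: "1 + d * e v \<noteq> 0" for v by (metis zero_complex.simps(1) less_irrefl)
  have npos: "1 + d * e v \<notin> \<real>\<^sub>\<le>\<^sub>0" for v
  proof
    assume "1 + d * e v \<in> \<real>\<^sub>\<le>\<^sub>0"
    then have "Re (1 + d * e v) \<le> 0" by (metis nonpos_Reals_cases Re_complex_of_real)
    with re[of v] show False by linarith
  qed
  define p where "p = (\<lambda>v. Ln A + of_real m * 2 * of_real pi * \<i> * of_real v - Ln (1 + d * e v))"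
  have ep: "exp (p v) = \<gamma> v - z" for v
    unfolding p_def g using A nz[of v] by (simp add: exp_diff exp_add e_def)
  have eq: "(\<lambda>v. \<gamma> v - z) = exp \<circ> p" using ep by auto
  have "continuous_on {0..1} e" unfolding e_def by (intro continuous_intros)
  then have "path p" unfolding path_def p_def using npos
    by (intro continuous_intros) auto
  then have "winding_number (exp \<circ> p) 0 = (p 1 - p 0) / (2 * of_real pi * \<i>)"
    by (simp add: winding_number_compose_exp pathfinish_def pathstart_def)
  moreover have "e 1 = 1" "e 0 = 1" using m by (auto simp: e_def exp_minus)
  ultimately have "winding_number (exp \<circ> p) 0 = of_real m"
    by (simp add: p_def field_simps)
  then show "winding_number \<gamma> z = of_real m"
    by (simp add: winding_number_offset[of \<gamma> z] eq)
  show "z \<notin> path_image \<gamma>"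
    using ep by (auto simp: path_image_def) (metis exp_not_eq_zero right_minus_eq)
qed
lemma Re_frac: "Re ((1 - u) / (1 + u)) = (1 - (norm u)^2) / (norm (1 + u))^2"
proof -
  have n: "(norm u)^2 = (Re u)^2 + (Im u)^2" by (rule cmod_power2)
  have "Re (1 - u) * Re (1 + u) + Im (1 - u) * Im (1 + u) = 1 - (norm u)^2"
    unfolding n by (simp add: algebra_simps power2_eq_square)
  then show ?thesis by (simp add: Re_divide')
qed

lemma Im_W: "Im (\<i> * of_real k * (1 - u) / (1 + u)) = k * Re ((1 - u) / (1 + u))"
proof -
  define z where "z = (1 - u) / (1 + u)"
  have 1: "\<i> * of_real k * (1 - u) / (1 + u) = \<i> * (of_real k * z)" by (simp add: z_def)
  have "Im (\<i> * of_real k * (1 - u) / (1 + u)) = Im (\<i> * (of_real k * z))" using 1 by (rule arg_cong)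
  also have "\<dots> = k * Re z" by simp
  finally show ?thesis by (simp only: z_def)
qed

lemma g_up:
  fixes E b s c K :: complex
  assumes "E \<noteq> 0" "E + b \<noteq> 0"
  shows "s * (\<i> * K * (1 - b / E) / (1 + b / E)) + c - (s * (\<i> * K) + c)
     = (s * (- 2 * \<i> * K * b)) * (1 / E) / (1 + b * (1 / E))"
proof -
  define D where "D = E + b"
  have bD: "b = D - E" unfolding D_def by simp
  have D: "D \<noteq> 0" using assms D_def by simp
  have 1: "1 + b / E = D / E" "1 - b / E = (2 * E - D) / E" "1 + b * (1 / E) = D / E"
    unfolding bD using assms(1) by (simp_all add: field_simps)
  show ?thesis unfolding 1 unfolding bD using D assms(1) by (simp add: field_simps)
qed

lemma g_lo:
  fixes E b s c K :: complex
  assumes "E \<noteq> 0" "E + b \<noteq> 0" "b \<noteq> 0"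
  shows "s * (\<i> * K * (1 - b / E) / (1 + b / E)) + c - (s * (- \<i> * K) + c)
     = (s * (2 * \<i> * K / b)) * E / (1 + (1 / b) * E)"
proof -
  define D where "D = E + b"
  have D: "D \<noteq> 0" using assms D_def by simp
  have bD: "b = D - E" unfolding D_def by simp
  have ED: "E = D - b" unfolding D_def by simp
  have L: "s * (\<i> * K * (1 - b / E) / (1 + b / E)) + c - (s * (- \<i> * K) + c) = s * 2 * \<i> * K * E / D"
  proof -
    have 1: "1 + b / E = D / E" "1 - b / E = (2 * E - D) / E"
      unfolding bD using assms(1) by (simp_all add: field_simps)
    show ?thesis unfolding 1 using D assms(1) by (simp add: field_simps)
  qed
  have R: "(s * (2 * \<i> * K / b)) * E / (1 + (1 / b) * E) = s * 2 * \<i> * K * E / D"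
  proof -
    have 1: "1 + (1 / b) * E = D / b"
      unfolding ED using assms(3) by (simp add: field_simps)
    show ?thesis unfolding 1 using D assms(3) by (simp add: field_simps)
  qed
  show ?thesis using L R by simp
qed

lemma core:
  fixes k :: real and w0 :: complex
  assumes k: "k > 0" and im: "Im w0 \<noteq> 0" and n1: "w0 \<noteq> \<i> * of_real k" and n2: "w0 \<noteq> - \<i> * of_real k"
  defines "b \<equiv> (\<i> * of_real k - w0) / (\<i> * of_real k + w0)"
  defines "W \<equiv> \<lambda>t::real. \<i> * of_real k * (1 - b * exp (- (2 * \<i> * of_real k * of_real t))) / (1 + b * exp (- (2 * \<i> * of_real k * of_real t)))"
  shows "W 0 = w0"
    and "\<And>t S. (W has_vector_derivative (- (of_real k ^ 2 + (W t)^2))) (at t within S)"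
    and "\<And>t. W (t + pi / k) = W t"
    and "\<And>t. Im (W t) * Im w0 > 0"
    and "\<And>\<sigma> c. \<sigma> = 1 \<or> \<sigma> = -1 \<Longrightarrow>
        of_real \<sigma> * (if Im w0 > 0 then \<i> * of_real k else - \<i> * of_real k) + c \<notin> path_image (\<lambda>v. of_real \<sigma> * W (pi / k * v) + c) \<and>
        winding_number (\<lambda>v. of_real \<sigma> * W (pi / k * v) + c) (of_real \<sigma> * (if Im w0 > 0 then \<i> * of_real k else - \<i> * of_real k) + c) \<noteq> 0"
proof -
  have d0: "\<i> * of_real k + w0 \<noteq> 0" using n2 by (auto simp: add_eq_0_iff)
  have d1: "\<i> * of_real k - w0 \<noteq> 0" using n1 by auto
  have b0: "b \<noteq> 0" unfolding b_def using d0 d1 by simp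
  have nn: "(norm (\<i> * of_real k - w0))^2 - (norm (\<i> * of_real k + w0))^2 = - 4 * (k * Im w0)"
    by (simp add: cmod_power2) (simp add: algebra_simps power2_eq_square)
  have nb: "(norm b)^2 = (norm (\<i> * of_real k - w0))^2 / (norm (\<i> * of_real k + w0))^2"
    unfolding b_def by (simp add: norm_divide power_divide)
  have npos: "(norm (\<i> * of_real k + w0))^2 > 0" using d0 by simp
  have bl: "norm b < 1 \<longleftrightarrow> Im w0 > 0"
  proof -
    have "norm b < 1 \<longleftrightarrow> (norm b)^2 < 1" by (simp add: power_less_one_iff abs_less_iff)
    also have "\<dots> \<longleftrightarrow> (norm (\<i> * of_real k - w0))^2 < (norm (\<i> * of_real k + w0))^2"
      using npos by (simp add: nb)
    also have "\<dots> \<longleftrightarrow> Im w0 > 0"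
    proof -
      have "0 < k * Im w0 \<longleftrightarrow> 0 < Im w0" using k by (simp add: zero_less_mult_iff)
      then show ?thesis using nn by linarith
    qed
    finally show ?thesis .
  qed
  have bg: "norm b > 1 \<longleftrightarrow> Im w0 < 0"
  proof -
    have "norm b > 1 \<longleftrightarrow> (norm b)^2 > 1"
    proof
      assume "norm b > 1" then show "(norm b)^2 > 1" by (simp add: one_less_power)
    next
      assume a: "(norm b)^2 > 1"
      show "norm b > 1"
      proof (rule ccontr)
        assume "\<not> norm b > 1"
        then have "(norm b)^2 \<le> 1" by (simp add: power_le_one)
        with a show False by simp
      qed
    qed
    also have "\<dots> \<longleftrightarrow> (norm (\<i> * of_real k - w0))^2 > (norm (\<i> * of_real k + w0))^2"
      using npos by (simp add: nb)
    also have "\<dots> \<longleftrightarrow> Im w0 < 0"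
    proof -
      have "k * Im w0 < 0 \<longleftrightarrow> Im w0 < 0" using k by (simp add: mult_less_0_iff)
      then show ?thesis using nn by linarith
    qed
    finally show ?thesis .
  qed
  have bn1: "norm b \<noteq> 1" using bl bg im by (metis less_irrefl linorder_neqE_linordered_idom)
  have "complex_of_real k \<noteq> 0" using k by simp
  have p1: "1 + b = 2 * \<i> * of_real k / (\<i> * of_real k + w0)"
    unfolding b_def using d0 by (simp add: field_simps)
  have m1: "1 - b = 2 * w0 / (\<i> * of_real k + w0)"
    unfolding b_def using d0 by (simp add: field_simps)
  have "W 0 = \<i> * of_real k * (1 - b) / (1 + b)" unfolding W_def by simp
  also have "\<dots> = w0"
  proof -
    have gen: "D \<noteq> 0 \<Longrightarrow> a \<noteq> 0 \<Longrightarrow> a * (2 * w / D) / (2 * a / D) = w" for a D w :: complex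
      by (simp add: field_simps)
    show ?thesis unfolding p1 m1 using gen[OF d0, of "\<i> * of_real k" w0] k by (simp add: mult.assoc)
  qed
  finally show "W 0 = w0" .
  show "\<And>t S. (W has_vector_derivative (- (of_real k ^ 2 + (W t)^2))) (at t within S)"
    unfolding W_def by (rule W_deriv[OF bn1, unfolded Let_def])
  show "\<And>t. W (t + pi / k) = W t"
  proof -
    fix t
    have "- (2 * \<i> * of_real k * of_real (t + pi / k)) = - (2 * \<i> * of_real k * of_real t) + (- (2 * of_real pi * \<i>))"
      using k by (simp add: field_simps)
    then have "exp (- (2 * \<i> * of_real k * of_real (t + pi / k))) = exp (- (2 * \<i> * of_real k * of_real t)) * exp (- (2 * of_real pi * \<i>))"
      by (simp only: exp_add)
    also have "exp (- (2 * of_real pi * \<i>)) = 1" by (simp add: exp_minus)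
    finally have "exp (- (2 * \<i> * of_real k * of_real (t + pi / k))) = exp (- (2 * \<i> * of_real k * of_real t))" by simp
    then show "W (t + pi / k) = W t" unfolding W_def by simp
  qed
  show "\<And>t. Im (W t) * Im w0 > 0"
  proof -
    fix t
    let ?u = "b * exp (- (2 * \<i> * of_real k * of_real t))"
    have nu: "norm ?u = norm b" by (rule norm_u)
    have nz: "1 + ?u \<noteq> 0"
    proof
      assume "1 + ?u = 0"
      then have "?u = -1" by (simp add: add_eq_0_iff)
      then have "norm ?u = 1" by simp
      with nu bn1 show False by simp
    qed
    have "Im (W t) = k * Re ((1 - ?u) / (1 + ?u))"
      unfolding W_def by (rule Im_W)
    also have "\<dots> = k * ((1 - (norm b)^2) / (norm (1 + ?u))^2)" by (simp add: Re_frac nu)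
    finally have imw: "Im (W t) = k * ((1 - (norm b)^2) / (norm (1 + ?u))^2)" .
    have pz: "(norm (1 + ?u))^2 > 0" using nz by simp
    show "Im (W t) * Im w0 > 0"
    proof (cases "Im w0 > 0")
      case True
      then have "norm b < 1" using bl by simp
      then have "(norm b)^2 < 1" by (simp add: power_less_one_iff abs_less_iff)
      then have "Im (W t) > 0" using imw pz k by simp
      then show ?thesis using True by simp
    next
      case False
      then have "Im w0 < 0" using im by simp
      then have "norm b > 1" using bg by simp
      then have "(norm b)^2 > 1" by (simp add: one_less_power)
      then have "Im (W t) < 0" using imw pz k by (simp add: mult_pos_neg divide_neg_pos)
      then show ?thesis using \<open>Im w0 < 0\<close> by (simp add: mult_neg_neg)
    qed
  qed
  show "\<And>\<sigma> c. \<sigma> = 1 \<or> \<sigma> = -1 \<Longrightarrow>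
        of_real \<sigma> * (if Im w0 > 0 then \<i> * of_real k else - \<i> * of_real k) + c \<notin> path_image (\<lambda>v. of_real \<sigma> * W (pi / k * v) + c) \<and>
        winding_number (\<lambda>v. of_real \<sigma> * W (pi / k * v) + c) (of_real \<sigma> * (if Im w0 > 0 then \<i> * of_real k else - \<i> * of_real k) + c) \<noteq> 0"
  proof -
    fix \<sigma> :: real and c :: complex
    assume sg: "\<sigma> = 1 \<or> \<sigma> = -1"
    then have s0: "\<sigma> \<noteq> 0" by auto
    let ?E = "\<lambda>v::real. exp (2 * of_real pi * \<i> * of_real v)"
    have ex: "exp (- (2 * \<i> * of_real k * of_real (pi / k * v))) = 1 / ?E v" for v
    proof -
      have kz: "complex_of_real k \<noteq> 0" using k by simp
      have "- (2 * \<i> * of_real k * of_real (pi / k * v)) = - (2 * of_real pi * \<i> * of_real v)"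
        using kz by (simp add: field_simps)
      then have "exp (- (2 * \<i> * of_real k * of_real (pi / k * v))) = exp (- (2 * of_real pi * \<i> * of_real v))"
        by (rule arg_cong)
      also have "\<dots> = 1 / exp (2 * of_real pi * \<i> * of_real v)" by (simp add: exp_minus inverse_eq_divide)
      finally show ?thesis .
    qed
    have Wv: "W (pi / k * v) = \<i> * of_real k * (1 - b / ?E v) / (1 + b / ?E v)" for v
      unfolding W_def ex by simp
    have En: "norm (?E v) = 1" for v by (simp add: norm_exp_eq_Re)
    then have E0: "?E v \<noteq> 0" for v by (metis norm_zero zero_neq_one)
    show "?thesis \<sigma> c"
    proof (cases "Im w0 > 0")
      case True
      then have bl1: "norm b < 1" using bl by simp
      have nz: "?E v + b \<noteq> 0" for v
      proof
        assume "?E v + b = 0"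
        then have "b = - ?E v" by (simp add: add_eq_0_iff)
        then have "norm b = 1" using En by simp
        with bl1 show False by simp
      qed
      have g: "of_real \<sigma> * W (pi / k * v) + c - (of_real \<sigma> * (\<i> * of_real k) + c)
            = (of_real \<sigma> * (- 2 * \<i> * of_real k * b)) * exp (of_real (-1) * 2 * of_real pi * \<i> * of_real v)
              / (1 + b * exp (of_real (-1) * 2 * of_real pi * \<i> * of_real v))" for v
      proof -
        have e1: "exp (of_real (-1) * 2 * of_real pi * \<i> * of_real v) = 1 / ?E v"
          by (simp add: exp_minus divide_inverse)
        show ?thesis unfolding Wv e1 by (rule g_up[OF E0 nz])
      qed
      have A: "of_real \<sigma> * (- 2 * \<i> * of_real k * b) \<noteq> 0" using s0 k b0 by simp
      have m: "(-1::real) = 1 \<or> (-1::real) = -1" by simp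
      note w = wind[OF bl1 A m g]
      show ?thesis using w True by simp
    next
      case False
      then have "Im w0 < 0" using im by simp
      then have bg1: "norm b > 1" using bg by simp
      then have bl1: "norm (1 / b) < 1" by (simp add: norm_divide divide_less_eq)
      have nz: "?E v + b \<noteq> 0" for v
      proof
        assume "?E v + b = 0"
        then have "b = - ?E v" by (simp add: add_eq_0_iff)
        then have "norm b = 1" using En by simp
        with bg1 show False by simp
      qed
      have g: "of_real \<sigma> * W (pi / k * v) + c - (of_real \<sigma> * (- \<i> * of_real k) + c)
            = (of_real \<sigma> * (2 * \<i> * of_real k / b)) * exp (of_real 1 * 2 * of_real pi * \<i> * of_real v)
              / (1 + (1 / b) * exp (of_real 1 * 2 * of_real pi * \<i> * of_real v))" for v
        unfolding Wv by (simp only: of_real_1 mult_1) (rule g_lo[OF E0 nz b0])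
      have A: "of_real \<sigma> * (2 * \<i> * of_real k / b) \<noteq> 0" using s0 k b0 by simp
      have m: "(1::real) = 1 \<or> (1::real) = -1" by simp
      note w = wind[OF bl1 A m g]
      show ?thesis using w False by simp
    qed
  qed
qed

lemma zero_stay:
  fixes y g :: "real \<Rightarrow> real"
  assumes le: "lo \<le> hi"
    and d: "\<And>\<tau>. \<tau> \<in> {lo..hi} \<Longrightarrow> (y has_real_derivative (y \<tau> * g \<tau>)) (at \<tau> within {lo..hi})"
    and M: "\<And>\<tau>. \<tau> \<in> {lo..hi} \<Longrightarrow> \<bar>g \<tau>\<bar> \<le> M"
  shows "y lo = 0 \<longleftrightarrow> y hi = 0"
proof
  assume y0: "y lo = 0"
  define v where "v = (\<lambda>\<tau>. (y \<tau>)^2 * exp (- (2 * M * \<tau>)))"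
  have dv: "(v has_real_derivative (2 * (y \<tau>)^2 * (g \<tau> - M) * exp (- (2 * M * \<tau>)))) (at \<tau> within {lo..hi})"
    if "\<tau> \<in> {lo..hi}" for \<tau>
    unfolding v_def
    by (rule derivative_eq_intros d[OF that] refl)+ (simp add: algebra_simps power2_eq_square)
  obtain \<xi> where \<xi>: "\<xi> \<in> {lo..hi}" and eq: "v hi - v lo = (2 * (y \<xi>)^2 * (g \<xi> - M) * exp (- (2 * M * \<xi>))) * (hi - lo)"
  proof -
    have "\<exists>\<xi>\<in>{lo..hi}. v hi - v lo = (\<lambda>\<tau>. (*) (2 * (y \<tau>)^2 * (g \<tau> - M) * exp (- (2 * M * \<tau>)))) \<xi> (hi - lo)"
      by (rule mvt_very_simple[OF le]) (use dv in \<open>auto simp: has_field_derivative_def\<close>)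
    then show ?thesis using that by auto
  qed
  have "g \<xi> - M \<le> 0" using M[OF \<xi>] by linarith
  then have "(2 * (y \<xi>)^2 * (g \<xi> - M) * exp (- (2 * M * \<xi>))) \<le> 0"
    by (simp add: mult_nonneg_nonpos mult_nonpos_nonneg)
  then have "v hi - v lo \<le> 0" unfolding eq using le by (simp add: mult_nonpos_nonneg)
  moreover have "v lo = 0" using y0 by (simp add: v_def)
  moreover have "v hi \<ge> 0" by (simp add: v_def)
  ultimately have "v hi = 0" by linarith
  then show "y hi = 0" by (simp add: v_def)
next
  assume y0: "y hi = 0"
  define v where "v = (\<lambda>\<tau>. (y \<tau>)^2 * exp (2 * M * \<tau>))"
  have dv: "(v has_real_derivative (2 * (y \<tau>)^2 * (g \<tau> + M) * exp (2 * M * \<tau>))) (at \<tau> within {lo..hi})"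
    if "\<tau> \<in> {lo..hi}" for \<tau>
    unfolding v_def
    by (rule derivative_eq_intros d[OF that] refl)+ (simp add: algebra_simps power2_eq_square)
  obtain \<xi> where \<xi>: "\<xi> \<in> {lo..hi}" and eq: "v hi - v lo = (2 * (y \<xi>)^2 * (g \<xi> + M) * exp (2 * M * \<xi>)) * (hi - lo)"
  proof -
    have "\<exists>\<xi>\<in>{lo..hi}. v hi - v lo = (\<lambda>\<tau>. (*) (2 * (y \<tau>)^2 * (g \<tau> + M) * exp (2 * M * \<tau>))) \<xi> (hi - lo)"
      by (rule mvt_very_simple[OF le]) (use dv in \<open>auto simp: has_field_derivative_def\<close>)
    then show ?thesis using that by auto
  qed
  have "g \<xi> + M \<ge> 0" using M[OF \<xi>] by linarith
  then have "(2 * (y \<xi>)^2 * (g \<xi> + M) * exp (2 * M * \<xi>)) \<ge> 0"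
    by simp
  then have "v hi - v lo \<ge> 0" unfolding eq using le by simp
  moreover have "v hi = 0" using y0 by (simp add: v_def)
  moreover have "v lo \<ge> 0" by (simp add: v_def)
  ultimately have "v lo = 0" by linarith
  then show "y lo = 0" by (simp add: v_def)
qed

lemma sol_snd:
  assumes "is_solution F I x" "\<tau> \<in> I"
  shows "((\<lambda>t. snd (x t)) has_real_derivative snd (F (x \<tau>))) (at \<tau> within I)"
proof -
  have "(x has_vector_derivative F (x \<tau>)) (at \<tau> within I)" using assms unfolding is_solution_def by blast
  then have "(x has_derivative (\<lambda>h. h *\<^sub>R F (x \<tau>))) (at \<tau> within I)" by (simp add: has_vector_derivative_def)
  from has_derivative_snd[OF this] show ?thesis
    by (simp add: has_field_derivative_def mult.commute[of _ "snd (F (x \<tau>))"])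
qed

lemma sol_cont:
  assumes "is_solution F I x"
  shows "continuous_on I x"
  using assms unfolding is_solution_def by (intro continuous_on_vector_derivative) blast

lemma line_inv:
  assumes Fs: "\<And>p q. snd (F (p, q)) = (q - l) * (a * p + b)"
  shows "line_invariant F l"
  unfolding line_invariant_def
proof (intro allI impI, elim conjE)
  fix I x t0 t
  assume sol: "is_solution F I x" and t0: "t0 \<in> I" and t: "t \<in> I" and l0: "snd (x t0) = l"
  define lo where "lo = min t0 t"
  define hi where "hi = max t0 t"
  have le: "lo \<le> hi" unfolding lo_def hi_def by simp
  have iv: "is_interval I" using sol unfolding is_solution_def by blast
  have sub: "{lo..hi} \<subseteq> I"
  proof
    fix \<tau> assume "\<tau> \<in> {lo..hi}"
    then have a: "lo \<le> \<tau>" "\<tau> \<le> hi" by auto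
    have "lo \<in> I" unfolding lo_def using t0 t by (simp add: min_def)
    moreover have "hi \<in> I" unfolding hi_def using t0 t by (simp add: max_def)
    ultimately show "\<tau> \<in> I" using iv a unfolding is_interval_1 by blast
  qed
  define g where "g = (\<lambda>\<tau>. a * fst (x \<tau>) + b)"
  define y where "y = (\<lambda>\<tau>. snd (x \<tau>) - l)"
  have cx: "continuous_on {lo..hi} x" using sol_cont[OF sol] sub continuous_on_subset by blast
  have cg: "continuous_on {lo..hi} g" unfolding g_def by (intro continuous_intros cx)
  have "bounded (g ` {lo..hi})" by (intro compact_imp_bounded compact_continuous_image cg compact_Icc)
  then obtain M where M0: "\<forall>z\<in>g ` {lo..hi}. \<bar>z\<bar> \<le> M" unfolding bounded_real by blast
  have M: "\<And>\<tau>. \<tau> \<in> {lo..hi} \<Longrightarrow> \<bar>g \<tau>\<bar> \<le> M" using M0 by blast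
  have d: "(y has_real_derivative (y \<tau> * g \<tau>)) (at \<tau> within {lo..hi})" if "\<tau> \<in> {lo..hi}" for \<tau>
  proof -
    have "((\<lambda>t. snd (x t)) has_real_derivative snd (F (x \<tau>))) (at \<tau> within {lo..hi})"
      using sol_snd[OF sol, of \<tau>] that sub by (meson DERIV_subset subsetD)
    moreover have "snd (F (x \<tau>)) = y \<tau> * g \<tau>"
      using Fs[of "fst (x \<tau>)" "snd (x \<tau>)"] by (simp add: y_def g_def)
    ultimately show ?thesis unfolding y_def using DERIV_diff[OF _ DERIV_const, of "\<lambda>t. snd (x t)"] by simp
  qed
  have eq: "y lo = 0 \<longleftrightarrow> y hi = 0" by (rule zero_stay[OF le d M])
  have "y t0 = 0" using l0 by (simp add: y_def)
  then have "y t = 0" using eq unfolding lo_def hi_def by (cases "t0 \<le> t") (auto simp: min_def max_def)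
  then show "snd (x t) = l" by (simp add: y_def)
qed

lemma resc_cons:
  assumes R: "rescaled_hamiltonian F H l"
  shows "conserved_off_line F H l"
  unfolding conserved_off_line_def
proof (intro allI impI, elim conjE)
  fix I x
  assume sol: "is_solution F I x" and off: "\<forall>t\<in>I. snd (x t) \<noteq> l"
  have cv: "convex I" using sol unfolding is_solution_def by (simp add: is_interval_convex_1)
  show "\<exists>C. \<forall>t\<in>I. H (x t) = C"
  proof (rule has_derivative_zero_constant[OF cv])
    fix t assume t: "t \<in> I"
    obtain p q where pq: "x t = (p, q)" by fastforce
    have ql: "q \<noteq> l" using off t pq by force
    obtain Hp Hq where hd: "(H has_derivative (\<lambda>(dp, dq). Hp * dp + Hq * dq)) (at (p, q))"
      and Fpq: "F (p, q) = ((q - l)^2 * (- Hq), (q - l)^2 * Hp)"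
      using R ql unfolding rescaled_hamiltonian_def by blast
    have "(x has_vector_derivative F (x t)) (at t within I)" using sol t unfolding is_solution_def by blast
    then have xd: "(x has_derivative (\<lambda>h. h *\<^sub>R F (p, q))) (at t within I)"
      by (simp add: has_vector_derivative_def pq)
    have "((\<lambda>t. H (x t)) has_derivative (\<lambda>h. (\<lambda>(dp, dq). Hp * dp + Hq * dq) (h *\<^sub>R F (p, q)))) (at t within I)"
      by (rule has_derivative_compose[OF xd]) (simp add: pq hd)
    moreover have "(\<lambda>h. (\<lambda>(dp, dq). Hp * dp + Hq * dq) (h *\<^sub>R F (p, q))) = (\<lambda>h. 0)"
      proof
      fix h :: real
      have "h *\<^sub>R F (p, q) = (h * ((q - l)^2 * (- Hq)), h * ((q - l)^2 * Hp))" by (simp add: Fpq)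
      then show "(\<lambda>(dp, dq). Hp * dp + Hq * dq) (h *\<^sub>R F (p, q)) = 0" by (simp add: ring_distribs mult.left_commute)
    qed
    ultimately show "((\<lambda>t. H (x t)) has_derivative (\<lambda>h. 0)) (at t within I)" by simp
  qed
qed

lemma tc_RI: "to_complex (Re Z, Im Z) = Z" by (simp add: to_complex_def complex_eq_iff)
lemma tc_inj: "to_complex a = to_complex b \<Longrightarrow> a = b"
  by (cases a; cases b) (simp add: to_complex_def complex_eq_iff)
lemma tc_zero: "to_complex z = 0 \<longleftrightarrow> z = 0"
  by (cases z) (simp add: to_complex_def complex_eq_iff zero_prod_def)

lemma filled:
  fixes k \<sigma> \<rho> :: real and c0 :: complex and F :: "real \<times> real \<Rightarrow> real \<times> real"
  assumes k: "k > 0" and sg: "\<sigma> = 1 \<or> \<sigma> = -1" and rh: "\<rho> = 1 \<or> \<rho> = -1"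
    and HF: "\<And>z. to_complex (F z) = of_real \<sigma> * (- (of_real k ^ 2 + (of_real \<sigma> * (to_complex z - c0))^2))"
  shows "filled_with_periodic_orbits F {z. \<rho> * Im (of_real \<sigma> * (to_complex z - c0)) > 0}"
proof -
  let ?S = "{z. \<rho> * Im (of_real \<sigma> * (to_complex z - c0)) > 0}"
  have ss: "complex_of_real \<sigma> * complex_of_real \<sigma> = 1" using sg by auto
  have rr: "\<rho> * \<rho> = 1" using rh by auto
  define w where "w = (\<lambda>z. of_real \<sigma> * (to_complex z - c0))"
  have winv: "to_complex z = c0 + of_real \<sigma> * w z" for z
    unfolding w_def by (simp add: ss algebra_simps mult.assoc[symmetric])
  have HF': "to_complex (F z) = of_real \<sigma> * (- (of_real k ^ 2 + (w z)^2))" for z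
    unfolding w_def by (rule HF)
  have eqF: "F z = 0 \<longleftrightarrow> (w z = \<i> * of_real k \<or> w z = - \<i> * of_real k)" for z
  proof -
    have s0: "complex_of_real \<sigma> \<noteq> 0" using sg by auto
    have "F z = 0 \<longleftrightarrow> to_complex (F z) = 0" by (simp add: tc_zero)
    also have "\<dots> \<longleftrightarrow> of_real k ^ 2 + (w z)^2 = 0"
      unfolding HF' using s0 by (simp only: mult_eq_0_iff neg_equal_0_iff_equal) simp
    also have "\<dots> \<longleftrightarrow> (w z - \<i> * of_real k) * (w z + \<i> * of_real k) = 0"
      by (simp add: algebra_simps power2_eq_square)
    also have "\<dots> \<longleftrightarrow> (w z = \<i> * of_real k \<or> w z = - \<i> * of_real k)"
      by (auto simp: add_eq_0_iff)
    finally show ?thesis .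
  qed
  have eqS: "z \<in> ?S \<longleftrightarrow> \<rho> * Im (w z) > 0" for z unfolding w_def by simp
  have eqFS: "z \<in> ?S \<and> F z = 0 \<longleftrightarrow> w z = of_real \<rho> * \<i> * of_real k" for z
    using rh k unfolding eqS eqF by auto
  define e where "e = (Re (c0 + of_real \<sigma> * (of_real \<rho> * \<i> * of_real k)), Im (c0 + of_real \<sigma> * (of_real \<rho> * \<i> * of_real k)))"
  have we: "w e = of_real \<rho> * \<i> * of_real k"
    unfolding w_def e_def tc_RI by (simp add: ss mult.assoc[symmetric])
  have "e \<in> ?S \<and> F e = 0" using eqFS we by blast
  then have ex: "\<exists>e\<in>?S. F e = 0" by blast
  show ?thesis
    unfolding filled_with_periodic_orbits_def
  proof (intro conjI ex ballI impI)
    fix z0 assume z0S: "z0 \<in> ?S" and Fz0: "F z0 \<noteq> 0"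
    define w0 where "w0 = w z0"
    have im: "Im w0 \<noteq> 0" using z0S unfolding eqS w0_def by auto
    have n1: "w0 \<noteq> \<i> * of_real k" and n2: "w0 \<noteq> - \<i> * of_real k" using Fz0 eqF unfolding w0_def by auto
    define b where "b = (\<i> * of_real k - w0) / (\<i> * of_real k + w0)"
    define W where "W = (\<lambda>t::real. \<i> * of_real k * (1 - b * exp (- (2 * \<i> * of_real k * of_real t))) / (1 + b * exp (- (2 * \<i> * of_real k * of_real t))))"
    note C0 = core[OF k im n1 n2, folded b_def]
    have C1: "W 0 = w0" unfolding W_def by (rule C0(1))
    have C3: "W (t + pi / k) = W t" for t unfolding W_def by (rule C0(3))
    have C4: "Im (W t) * Im w0 > 0" for t unfolding W_def by (rule C0(4))
    have C5: "of_real \<sigma>' * (if Im w0 > 0 then \<i> * of_real k else - \<i> * of_real k) + c \<notin> path_image (\<lambda>v. of_real \<sigma>' * W (pi / k * v) + c) \<and>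
        winding_number (\<lambda>v. of_real \<sigma>' * W (pi / k * v) + c) (of_real \<sigma>' * (if Im w0 > 0 then \<i> * of_real k else - \<i> * of_real k) + c) \<noteq> 0"
      if "\<sigma>' = 1 \<or> \<sigma>' = -1" for \<sigma>' c unfolding W_def by (rule C0(5)[OF that])
    define x where "x = (\<lambda>t. (Re (c0 + of_real \<sigma> * W t), Im (c0 + of_real \<sigma> * W t)))"
    have tx: "to_complex (x t) = c0 + of_real \<sigma> * W t" for t unfolding x_def tc_RI ..
    have wx: "w (x t) = W t" for t unfolding w_def tx by (simp add: ss mult.assoc[symmetric])
    define T where "T = pi / k"
    have sol: "is_solution F UNIV x"
      unfolding is_solution_def
    proof (intro conjI ballI)
      show "is_interval (UNIV :: real set)" by simp
      fix t :: real
      let ?D = "of_real \<sigma> * (- (of_real k ^ 2 + (W t)^2))"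
      have dW0: "(W has_vector_derivative (- (of_real k ^ 2 + (W t)^2))) (at t)"
        unfolding W_def by (rule core(2)[OF k im n1 n2, folded b_def, of t UNIV])
      have dW: "((\<lambda>t. c0 + of_real \<sigma> * W t) has_vector_derivative ?D) (at t)"
        using has_vector_derivative_add[OF has_vector_derivative_const has_vector_derivative_mult_right[OF dW0, of "of_real \<sigma>"], of c0]
        by simp
      have "(x has_vector_derivative (Re ?D, Im ?D)) (at t)"
        unfolding x_def
        by (intro has_vector_derivative_Pair has_real_derivative_iff_has_vector_derivative[THEN iffD1]
             has_field_derivative_Re has_field_derivative_Im dW)
      moreover have "F (x t) = (Re ?D, Im ?D)"
        by (rule tc_inj) (simp only: tc_RI HF' wx)
      ultimately show "(x has_vector_derivative F (x t)) (at t within UNIV)" by simp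
    qed
    have x0: "x 0 = z0"
      by (rule tc_inj) (simp add: tx C1 w0_def w_def ss mult.assoc[symmetric])
    have Tpos: "T > 0" unfolding T_def using k by simp
    have per: "x (t + T) = x t" for t unfolding x_def T_def C3 ..
    have rw0: "\<rho> * Im w0 > 0" using z0S unfolding eqS w0_def .
    have inS: "x t \<in> ?S" for t
    proof -
      have "Im (W t) * Im w0 > 0" by (rule C4)
      moreover have "\<rho> * Im w0 > 0" using z0S unfolding eqS w0_def .
      ultimately have "\<rho> * Im (W t) > 0" using rh
        by (auto simp: zero_less_mult_iff)
      then show ?thesis unfolding eqS wx .
    qed
    have e0: "(if Im w0 > 0 then \<i> * of_real k else - \<i> * of_real k) = of_real \<rho> * \<i> * of_real k"
    proof (cases "\<rho> = 1")
      case True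
      then show ?thesis using rw0 by simp
    next
      case False
      then have "\<rho> = -1" using rh by simp
      then show ?thesis using rw0 by simp
    qed
    show "\<exists>x T. periodic_solution F z0 T x \<and> (\<forall>t. x t \<in> ?S) \<and>
           (\<forall>e\<in>?S. F e = 0 \<longrightarrow>
              to_complex e \<notin> path_image (\<lambda>u. to_complex (x (T * u))) \<and>
              winding_number (\<lambda>u. to_complex (x (T * u))) (to_complex e) \<noteq> 0)"
    proof (intro exI conjI allI ballI impI)
      show "periodic_solution F z0 T x" unfolding periodic_solution_def using sol x0 Tpos per by blast
      show "x t \<in> ?S" for t by (rule inS)
      fix e assume eS: "e \<in> ?S" and Fe: "F e = 0"
      have "w e = of_real \<rho> * \<i> * of_real k" using eqFS eS Fe by blast
      then have te: "to_complex e = of_real \<sigma> * (if Im w0 > 0 then \<i> * of_real k else - \<i> * of_real k) + c0"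
        unfolding e0 winv by simp
      have pth: "(\<lambda>u. to_complex (x (T * u))) = (\<lambda>v. of_real \<sigma> * W (pi / k * v) + c0)"
        unfolding tx T_def by (simp add: add.commute)
      from C5[OF sg, of c0]
      show "to_complex e \<notin> path_image (\<lambda>u. to_complex (x (T * u)))"
        and "winding_number (\<lambda>u. to_complex (x (T * u))) (to_complex e) \<noteq> 0"
        unfolding pth te by blast+
    qed
  qed
qed

lemma H0_deriv:
  fixes \<alpha> B h \<mu> s p q :: real
  assumes y: "q + s/2 \<noteq> 0"
  shows "((\<lambda>(p, q). - (p^2 + q^2 + \<alpha> * s * p + s * q - h + B + \<mu>) / (q + s/2)) has_derivative
     (\<lambda>(dp, dq). (- (2 * p + \<alpha> * s) / (q + s/2)) * dp +
                 (- (2 * q + s) / (q + s/2) + (p^2 + q^2 + \<alpha> * s * p + s * q - h + B + \<mu>) / (q + s/2)^2) * dq)) (at (p, q))"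
proof -
  define Y where "Y = q + s/2"
  have qY: "q = Y - s/2" unfolding Y_def by simp
  have Y0: "Y \<noteq> 0" using y Y_def by simp
  have e: "(\<lambda>(p, q). - (p^2 + q^2 + \<alpha> * s * p + s * q - h + B + \<mu>) / (q + s/2)) =
     (\<lambda>z. - ((fst z)^2 + (snd z)^2 + \<alpha> * s * fst z + s * snd z - h + B + \<mu>) / (snd z + s/2))"
    by (auto simp: case_prod_beta)
  show ?thesis unfolding e
    apply (rule derivative_eq_intros refl | simp add: y)+
    apply (rule ext)
    subgoal for z using Y0 by (cases z) (simp add: qY field_simps power2_eq_square inverse_eq_divide)
    done
qed
lemma Hpi_deriv:
  fixes \<alpha> B h \<mu> s p q :: real
  assumes y: "q - s/2 \<noteq> 0"
  shows "((\<lambda>(p, q). (p^2 + q^2 - \<alpha> * s * p - s * q + h - B + \<mu>) / (q - s/2)) has_derivative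
     (\<lambda>(dp, dq). ((2 * p - \<alpha> * s) / (q - s/2)) * dp +
                 ((2 * q - s) / (q - s/2) - (p^2 + q^2 - \<alpha> * s * p - s * q + h - B + \<mu>) / (q - s/2)^2) * dq)) (at (p, q))"
proof -
  define Y where "Y = q - s/2"
  have qY: "q = Y + s/2" unfolding Y_def by simp
  have Y0: "Y \<noteq> 0" using y Y_def by simp
  have y': "q * 2 \<noteq> s" using y by linarith
  have e: "(\<lambda>(p, q). (p^2 + q^2 - \<alpha> * s * p - s * q + h - B + \<mu>) / (q - s/2)) =
     (\<lambda>z. ((fst z)^2 + (snd z)^2 - \<alpha> * s * fst z - s * snd z + h - B + \<mu>) / (snd z - s/2))"
    by (auto simp: case_prod_beta)
  show ?thesis unfolding e
    apply (rule derivative_eq_intros refl | simp add: y y')+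
    apply (rule ext)
    subgoal for z using Y0 by (cases z) (simp add: qY field_simps power2_eq_square inverse_eq_divide)
    done
qed

lemma resc0:
  assumes a: "\<alpha> \<noteq> 0" and Om: "\<Omega> = (\<beta>/(1+c))/\<alpha> - s^2/2"
  shows "rescaled_hamiltonian (F0 \<alpha> \<beta> c h \<mu> s \<Omega>) (H0 \<alpha> \<beta> c h \<mu> s) (-s/2)"
  unfolding rescaled_hamiltonian_def
proof (intro allI impI)
  fix p q :: real assume q: "q \<noteq> - s/2"
  define B where "B = \<beta>/(1+c)"
  have y: "q + s/2 \<noteq> 0" using q by linarith
  define N where "N = p^2 + q^2 + \<alpha> * s * p + s * q - h + B / \<alpha> + \<mu>"
  let ?Hp = "- (2 * p + \<alpha> * s) / (q + s/2)"
  let ?Hq = "- (2 * q + s) / (q + s/2) + N / (q + s/2)^2"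
  have D: "(H0 \<alpha> \<beta> c h \<mu> s has_derivative (\<lambda>(dp, dq). ?Hp * dp + ?Hq * dq)) (at (p, q))"
    unfolding H0_def B_def[symmetric] N_def by (rule H0_deriv[OF y])
  define Y where "Y = q + s/2"
  have qY: "q = Y - s/2" unfolding Y_def by simp
  have Y0: "Y \<noteq> 0" using y Y_def by simp
  have "F0 \<alpha> \<beta> c h \<mu> s \<Omega> (p, q) = ((q - - s / 2)^2 * (- ?Hq), (q - - s / 2)^2 * ?Hp)"
    unfolding F0_def B_def[symmetric] Om N_def using a Y0
    by (simp add: qY field_simps power2_eq_square)
  with D show "\<exists>Hp Hq. (H0 \<alpha> \<beta> c h \<mu> s has_derivative (\<lambda>(dp, dq). Hp * dp + Hq * dq)) (at (p, q)) \<and>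
      F0 \<alpha> \<beta> c h \<mu> s \<Omega> (p, q) = ((q - - s / 2)^2 * (- Hq), (q - - s / 2)^2 * Hp)" by blast
qed

lemma resc_pi:
  assumes a: "\<alpha> \<noteq> 0" and Om: "\<Omega> = (\<beta>/(1-c))/\<alpha> + s^2/2"
  shows "rescaled_hamiltonian (Fpi \<alpha> \<beta> c h \<mu> s \<Omega>) (Hpi \<alpha> \<beta> c h \<mu> s) (s/2)"
  unfolding rescaled_hamiltonian_def
proof (intro allI impI)
  fix p q :: real assume q: "q \<noteq> s/2"
  define B where "B = \<beta>/(1-c)"
  have y: "q - s/2 \<noteq> 0" using q by linarith
  define N where "N = p^2 + q^2 - \<alpha> * s * p - s * q + h - B / \<alpha> + \<mu>"
  let ?Hp = "(2 * p - \<alpha> * s) / (q - s/2)"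
  let ?Hq = "(2 * q - s) / (q - s/2) - N / (q - s/2)^2"
  have D: "(Hpi \<alpha> \<beta> c h \<mu> s has_derivative (\<lambda>(dp, dq). ?Hp * dp + ?Hq * dq)) (at (p, q))"
    unfolding Hpi_def B_def[symmetric] N_def by (rule Hpi_deriv[OF y])
  define Y where "Y = q - s/2"
  have qY: "q = Y + s/2" unfolding Y_def by simp
  have Y0: "Y \<noteq> 0" using y Y_def by simp
  have "Fpi \<alpha> \<beta> c h \<mu> s \<Omega> (p, q) = ((q - s / 2)^2 * (- ?Hq), (q - s / 2)^2 * ?Hp)"
    unfolding Fpi_def B_def[symmetric] Om N_def using a Y0
    by (simp add: qY field_simps power2_eq_square)
  with D show "\<exists>Hp Hq. (Hpi \<alpha> \<beta> c h \<mu> s has_derivative (\<lambda>(dp, dq). Hp * dp + Hq * dq)) (at (p, q)) \<and>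
      Fpi \<alpha> \<beta> c h \<mu> s \<Omega> (p, q) = ((q - s / 2)^2 * (- Hq), (q - s / 2)^2 * Hp)" by blast
qed

lemma snd0:
  assumes a: "\<alpha> \<noteq> 0" and Om: "\<Omega> = (\<beta>/(1+c))/\<alpha> - s^2/2"
  shows "snd (F0 \<alpha> \<beta> c h \<mu> s \<Omega> (p, q)) = (q - (- s/2)) * ((-2) * p + (- \<alpha> * s))"
proof -
  define B where "B = \<beta>/(1+c)"
  show ?thesis unfolding F0_def Om B_def[symmetric] using a by (simp add: field_simps power2_eq_square)
qed

lemma sndpi:
  assumes a: "\<alpha> \<noteq> 0" and Om: "\<Omega> = (\<beta>/(1-c))/\<alpha> + s^2/2"
  shows "snd (Fpi \<alpha> \<beta> c h \<mu> s \<Omega> (p, q)) = (q - s/2) * (2 * p + (- \<alpha> * s))"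
proof -
  define B where "B = \<beta>/(1-c)"
  show ?thesis unfolding Fpi_def Om B_def[symmetric] using a by (simp add: field_simps power2_eq_square)
qed

lemma HF0:
  assumes a: "\<alpha> \<noteq> 0" and Om: "\<Omega> = (\<beta>/(1+c))/\<alpha> - s^2/2"
    and kk: "k^2 = - (s^2/4 * (\<alpha>^2 - 1) + h - \<mu> - \<Omega>)"
  shows "to_complex (F0 \<alpha> \<beta> c h \<mu> s \<Omega> z) = of_real 1 * (- (of_real k ^ 2 + (of_real 1 * (to_complex z - Complex (- \<alpha> * s / 2) (- s / 2)))^2))"
proof -
  obtain p q where z: "z = (p, q)" by fastforce
  have k2: "(complex_of_real k)^2 = of_real (k^2)" by simp
  define B where "B = \<beta>/(1+c)"
  show ?thesis unfolding z F0_def to_complex_def k2 kk Om B_def[symmetric] using a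
    by (simp add: complex_eq_iff power2_eq_square field_simps)
qed

lemma HFpi:
  assumes a: "\<alpha> \<noteq> 0" and Om: "\<Omega> = (\<beta>/(1-c))/\<alpha> + s^2/2"
    and kk: "k^2 = h - \<Omega> + \<mu> + s^2/4 * (1 - \<alpha>^2)"
  shows "to_complex (Fpi \<alpha> \<beta> c h \<mu> s \<Omega> z) = of_real (-1) * (- (of_real k ^ 2 + (of_real (-1) * (to_complex z - Complex (\<alpha> * s / 2) (s / 2)))^2))"
proof -
  obtain p q where z: "z = (p, q)" by fastforce
  have k2: "(complex_of_real k)^2 = of_real (k^2)" by simp
  define B where "B = \<beta>/(1-c)"
  show ?thesis unfolding z Fpi_def to_complex_def k2 kk Om B_def[symmetric] using a
    by (simp add: complex_eq_iff power2_eq_square field_simps)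
qed

theorem proposition1:
  fixes \<alpha> \<beta> c h \<mu> s \<Omega> :: real
  assumes "\<alpha> > 0" and "\<beta> \<ge> 0" and "-1 < c" and "c < 1"
  shows
   "(\<Omega> = (\<beta>/(1+c))/\<alpha> - s^2/2 \<longrightarrow>
       line_invariant (F0 \<alpha> \<beta> c h \<mu> s \<Omega>) (-s/2) \<and>
       conserved_off_line (F0 \<alpha> \<beta> c h \<mu> s \<Omega>) (H0 \<alpha> \<beta> c h \<mu> s) (-s/2) \<and>
       rescaled_hamiltonian (F0 \<alpha> \<beta> c h \<mu> s \<Omega>) (H0 \<alpha> \<beta> c h \<mu> s) (-s/2) \<and>
       (\<Omega> > h - \<mu> + s^2/4  *  (\<alpha>^2 - 1) \<longrightarrow>
          filled_with_periodic_orbits (F0 \<alpha> \<beta> c h \<mu> s \<Omega>) {z. snd z < -s/2} \<and>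
          filled_with_periodic_orbits (F0 \<alpha> \<beta> c h \<mu> s \<Omega>) {z. snd z > -s/2}))
  \<and> (\<Omega> = (\<beta>/(1-c))/\<alpha> + s^2/2 \<longrightarrow>
       line_invariant (Fpi \<alpha> \<beta> c h \<mu> s \<Omega>) (s/2) \<and>
       conserved_off_line (Fpi \<alpha> \<beta> c h \<mu> s \<Omega>) (Hpi \<alpha> \<beta> c h \<mu> s) (s/2) \<and>
       rescaled_hamiltonian (Fpi \<alpha> \<beta> c h \<mu> s \<Omega>) (Hpi \<alpha> \<beta> c h \<mu> s) (s/2) \<and>
       (\<Omega> < h + \<mu> + s^2/4  *  (1 - \<alpha>^2) \<longrightarrow>
          filled_with_periodic_orbits (Fpi \<alpha> \<beta> c h \<mu> s \<Omega>) {z. snd z < s/2} \<and>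
          filled_with_periodic_orbits (Fpi \<alpha> \<beta> c h \<mu> s \<Omega>) {z. snd z > s/2}))"
proof (intro conjI impI)
  have a: "\<alpha> \<noteq> 0" using assms(1) by simp
  {
    assume Om: "\<Omega> = (\<beta>/(1+c))/\<alpha> - s^2/2"
    show "line_invariant (F0 \<alpha> \<beta> c h \<mu> s \<Omega>) (-s/2)"
      by (rule line_inv[OF snd0[OF a Om]])
    show R: "rescaled_hamiltonian (F0 \<alpha> \<beta> c h \<mu> s \<Omega>) (H0 \<alpha> \<beta> c h \<mu> s) (-s/2)"
      by (rule resc0[OF a Om])
    show "conserved_off_line (F0 \<alpha> \<beta> c h \<mu> s \<Omega>) (H0 \<alpha> \<beta> c h \<mu> s) (-s/2)"
      by (rule resc_cons[OF R])
    assume G: "\<Omega> > h - \<mu> + s^2/4 * (\<alpha>^2 - 1)"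
    define k where "k = sqrt (- (s^2/4 * (\<alpha>^2 - 1) + h - \<mu> - \<Omega>))"
    have k: "k > 0" unfolding k_def using G by simp
    have kk: "k^2 = - (s^2/4 * (\<alpha>^2 - 1) + h - \<mu> - \<Omega>)" unfolding k_def using G by simp
    note HF = HF0[OF a Om kk]
    have S1: "{z. snd z < -s/2} = {z. (-1) * Im (of_real 1 * (to_complex z - Complex (- \<alpha> * s / 2) (- s / 2))) > 0}"
      by (auto simp: to_complex_def)
    have S2: "{z. snd z > -s/2} = {z. 1 * Im (of_real 1 * (to_complex z - Complex (- \<alpha> * s / 2) (- s / 2))) > 0}"
      by (auto simp: to_complex_def)
    show "filled_with_periodic_orbits (F0 \<alpha> \<beta> c h \<mu> s \<Omega>) {z. snd z < -s/2}"
      unfolding S1 by (rule filled[OF k _ _ HF]) simp_all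
    show "filled_with_periodic_orbits (F0 \<alpha> \<beta> c h \<mu> s \<Omega>) {z. snd z > -s/2}"
      unfolding S2 by (rule filled[OF k _ _ HF]) simp_all
  }
  {
    assume Om: "\<Omega> = (\<beta>/(1-c))/\<alpha> + s^2/2"
    show "line_invariant (Fpi \<alpha> \<beta> c h \<mu> s \<Omega>) (s/2)"
      by (rule line_inv[OF sndpi[OF a Om]])
    show R: "rescaled_hamiltonian (Fpi \<alpha> \<beta> c h \<mu> s \<Omega>) (Hpi \<alpha> \<beta> c h \<mu> s) (s/2)"
      by (rule resc_pi[OF a Om])
    show "conserved_off_line (Fpi \<alpha> \<beta> c h \<mu> s \<Omega>) (Hpi \<alpha> \<beta> c h \<mu> s) (s/2)"
      by (rule resc_cons[OF R])
    assume G: "\<Omega> < h + \<mu> + s^2/4 * (1 - \<alpha>^2)"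
    define k where "k = sqrt (h - \<Omega> + \<mu> + s^2/4 * (1 - \<alpha>^2))"
    have k: "k > 0" unfolding k_def using G by simp
    have kk: "k^2 = h - \<Omega> + \<mu> + s^2/4 * (1 - \<alpha>^2)" unfolding k_def using G by simp
    note HF = HFpi[OF a Om kk]
    have S1: "{z. snd z < s/2} = {z. 1 * Im (of_real (-1) * (to_complex z - Complex (\<alpha> * s / 2) (s / 2))) > 0}"
      by (auto simp: to_complex_def)
    have S2: "{z. snd z > s/2} = {z. (-1) * Im (of_real (-1) * (to_complex z - Complex (\<alpha> * s / 2) (s / 2))) > 0}"
      by (auto simp: to_complex_def)
    show "filled_with_periodic_orbits (Fpi \<alpha> \<beta> c h \<mu> s \<Omega>) {z. snd z < s/2}"
      unfolding S1 by (rule filled[OF k _ _ HF]) simp_all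
    show "filled_with_periodic_orbits (Fpi \<alpha> \<beta> c h \<mu> s \<Omega>) {z. snd z > s/2}"
      unfolding S2 by (rule filled[OF k _ _ HF]) simp_all
  }
qed

end
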